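(* Let $P_3$ be the path on $3$ vertices with endpoints $u,v$, let $q\in\mathbb{R}$, and let \[ H = \begin{bmatrix} 0&1&0\\ 1&q&1\\ 0&1&0\end{bmatrix}, \] i.e. the adjacency matrix plus the potential $\mathrm{diag}(0,q,0)$. Then there is perfect state transfer from $u$ to $v$ (for the Hamiltonian $H$) if and only if there exist integers $k$ and $\ell$ of opposite parity such that \[ (k^2-\ell^2)q^2 = 8\ell^2. \] When this is the case, perfect state transfer occurs at time $t = \frac{2\pi k}{\sqrt{q^2+8}}$.
   Context: With $U(t) = e^{itH}$, perfect state transfer from $u$ to $v$ occurs at time $T$ if $|U(T)_{u,v}|=1$, and "perfect state transfer from $u$ to $v$" means this happens for some $T$. *)

theory Defs
  imports "HOL-Analysis.Analysis" "HOL-Library.Numeral_Type"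
begin

text \<open>Matrix powers of square matrices (vertices of P3 are indexed by the type 3,
  with elements 0 (endpoint u), 1 (middle vertex), 2 (endpoint v)).\<close>

primrec mpow :: "'a::comm_ring_1^'n^'n \<Rightarrow> nat \<Rightarrow> 'a^'n^'n" where
  "mpow M 0 = mat 1"
| "mpow M (Suc n) = M ** mpow M n"

definition transfer_matrix :: "complex^'n^'n \<Rightarrow> real \<Rightarrow> complex^'n^'n" where
  "transfer_matrix H t = (\<chi> a b. \<Sum>n. ((\<i> * of_real t) ^ n / fact n) * (mpow H n $ a $ b))"

definition pst_at :: "complex^'n^'n \<Rightarrow> 'n \<Rightarrow> 'n \<Rightarrow> real \<Rightarrow> bool" where
  "pst_at H u v T \<longleftrightarrow> cmod (transfer_matrix H T $ u $ v) = 1"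

definition pst :: "complex^'n^'n \<Rightarrow> 'n \<Rightarrow> 'n \<Rightarrow> bool" where
  "pst H u v \<longleftrightarrow> (\<exists>T. pst_at H u v T)"

definition H_P3 :: "real \<Rightarrow> complex^3^3" where
  "H_P3 q = (\<chi> i j. if i = j then (if i = 1 then complex_of_real q else 0)
                     else if i = 1 \<or> j = 1 then 1 else 0)"

end

theory Submission
  imports Defs
begin

definition sq :: "real \<Rightarrow> real" where "sq q = sqrt (q^2+8)"
definition lp :: "real \<Rightarrow> real" where "lp q = (q + sq q)/2"
definition lm :: "real \<Rightarrow> real" where "lm q = (q - sq q)/2"
definition ca :: "real \<Rightarrow> real" where "ca q = - lm q / (2 * sq q)"
definition cb :: "real \<Rightarrow> real" where "cb q = lp q / (2 * sq q)"
definition cc :: "real \<Rightarrow> nat \<Rightarrow> real" where "cc q n = ca q * lp q ^ n + cb q * lm q ^ n"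

lemma sq_pos: "sq q > 0" unfolding sq_def
proof -
  have "q^2 \<ge> 0" by simp
  then show "sqrt (q^2+8) > 0" by (intro real_sqrt_gt_zero) linarith
qed
lemma three0: "(3::3) = 0" by simp
lemma sq_sq: "sq q ^ 2 = q^2 + 8" unfolding sq_def by (simp add: add_pos_nonneg zero_le_power2)
lemma sq_gt: "sq q > \<bar>q\<bar>"
proof -
  have "\<bar>q\<bar> = sqrt (q^2)" by simp
  also have "\<dots> < sq q" unfolding sq_def by (rule real_sqrt_less_mono) simp
  finally show ?thesis .
qed

lemma cc0: "cc q 0 = 1/2"
  using sq_pos[of q] by (simp add: cc_def ca_def cb_def lp_def lm_def field_simps)
lemma cc1: "cc q 1 = 0"
  using sq_pos[of q] by (simp add: cc_def ca_def cb_def lp_def lm_def field_simps)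
lemma lp_eq: "lp q ^ 2 = q * lp q + 2"
  using sq_sq[of q] by (simp add: lp_def power2_eq_square field_simps)
lemma lm_eq: "lm q ^ 2 = q * lm q + 2"
  using sq_sq[of q] by (simp add: lm_def power2_eq_square field_simps)
lemma ccSS: "cc q (Suc (Suc n)) = q * cc q (Suc n) + 2 * cc q n"
proof -
  have "lp q ^ Suc (Suc n) = lp q ^ n * lp q ^ 2" "lm q ^ Suc (Suc n) = lm q ^ n * lm q ^ 2"
    by (simp_all add: power2_eq_square)
  then show ?thesis unfolding cc_def using lp_eq[of q] lm_eq[of q]
    by (simp add: algebra_simps)
qed

lemma mpow_col:
  "mpow (H_P3 q) n $ 0 $ 2 = of_real (cc q n) - (if n = 0 then 1/2 else 0) \<and>
   mpow (H_P3 q) n $ 1 $ 2 = of_real (cc q (Suc n)) \<and>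
   mpow (H_P3 q) n $ 2 $ 2 = of_real (cc q n) + (if n = 0 then 1/2 else 0)"
proof (induction n)
  case 0
  then show ?case using cc1[of q] by (simp add: cc0 mat_def)
next
  case (Suc n)
  let ?M = "mpow (H_P3 q) n"
  have e: "\<And>i. mpow (H_P3 q) (Suc n) $ i $ 2 = H_P3 q $ i $ 0 * ?M $ 0 $ 2
      + H_P3 q $ i $ 1 * ?M $ 1 $ 2 + H_P3 q $ i $ 2 * ?M $ 2 $ 2"
    by (simp add: matrix_matrix_mult_def sum_3 three0 algebra_simps)
  have h: "H_P3 q $ 0 $ 0 = 0" "H_P3 q $ 0 $ 1 = 1" "H_P3 q $ 0 $ 2 = 0"
     "H_P3 q $ 1 $ 0 = 1" "H_P3 q $ 1 $ 1 = of_real q" "H_P3 q $ 1 $ 2 = 1"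
     "H_P3 q $ 2 $ 0 = 0" "H_P3 q $ 2 $ 1 = 1" "H_P3 q $ 2 $ 2 = 0"
    by (simp_all add: H_P3_def)
  have c2: "cc q (Suc (Suc n)) = q * cc q (Suc n) + 2 * cc q n" by (rule ccSS)
  show ?case using Suc.IH unfolding e h
    by (simp add: c2 algebra_simps)
qed

lemma entry02: "transfer_matrix (H_P3 q) t $ 0 $ 2 =
   of_real (ca q) * exp (\<i> * of_real (t * lp q)) + of_real (cb q) * exp (\<i> * of_real (t * lm q)) - 1/2"
proof -
  let ?f = "\<lambda>n. ((\<i> * of_real t) ^ n / fact n) * (mpow (H_P3 q) n $ 0 $ 2)"
  have tm: "?f n = of_real (ca q) * ((\<i> * of_real (t * lp q)) ^ n /\<^sub>R fact n)
      + of_real (cb q) * ((\<i> * of_real (t * lm q)) ^ n /\<^sub>R fact n)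
      - (\<lambda>n. if n = 0 then 1/2 else 0) n" for n
    using mpow_col[of q n]
    by (cases "n = 0") (simp_all add: cc_def scaleR_conv_of_real power_mult_distrib field_simps)
  have "?f sums (of_real (ca q) * exp (\<i> * of_real (t * lp q)) + of_real (cb q) * exp (\<i> * of_real (t * lm q)) - 1/2)"
    unfolding tm
  proof (intro sums_diff sums_add sums_mult exp_converges)
    show "(\<lambda>n. if n = 0 then 1/2 else 0::complex) sums (1/2)" using sums_single[of 0 "\<lambda>_. 1/2::complex"] by simp
  qed
  then show ?thesis unfolding transfer_matrix_def by (simp add: sums_iff)
qed

lemma key_ineq:
  fixes a b c1 d1 c2 d2 :: real
  assumes "a > 0" "b > 0" "a + b = 1/2" "c1^2 + d1^2 = 1" "c2^2 + d2^2 = 1"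
    "(a*c1 + b*c2 - 1/2)^2 + (a*d1 + b*d2)^2 = 1"
  shows "c1 = -1 \<and> c2 = -1"
proof -
  define X where "X = c1*c2 + d1*d2"
  have A: "(a*c1 + b*c2 - 1/2)^2 + (a*d1 + b*d2)^2 = a^2*(c1^2+d1^2) + b^2*(c2^2+d2^2) + 2*(a*b*X) - a*c1 - b*c2 + 1/4"
    unfolding X_def by (simp add: power2_eq_square algebra_simps)
  have B: "a*b*((c1-c2)^2+(d1-d2)^2) = a*b*((c1^2+d1^2) + (c2^2+d2^2)) - 2*(a*b*X)"
    unfolding X_def by (simp add: power2_eq_square algebra_simps)
  have C: "a^2 + b^2 + 2*(a*b) = 1/4"
  proof -
    have "(a+b)^2 = (1/2)^2" using assms(3) by (simp only:)
    then have "(a+b)^2 = 1/4" by (simp add: power2_eq_square)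
    then show ?thesis by (simp add: power2_eq_square algebra_simps)
  qed
  have A': "a^2 + b^2 + 2*(a*b*X) - a*c1 - b*c2 + 1/4 = 1" using A assms(4,5,6) by simp
  have B': "a*b*((c1-c2)^2+(d1-d2)^2) = 2*(a*b) - 2*(a*b*X)" using B assms(4,5) by simp
  have "d1^2 \<ge> 0" "d2^2 \<ge> 0" by simp_all
  then have "c1^2 \<le> 1" "c2^2 \<le> 1" using assms(4,5) by linarith+
  then have "\<bar>c1\<bar> \<le> 1" "\<bar>c2\<bar> \<le> 1" by (simp_all add: abs_square_le_1)
  then have "c1 \<ge> -1" "c2 \<ge> -1" by linarith+
  then have "a*(1+c1) \<ge> 0" "b*(1+c2) \<ge> 0" using assms(1,2) by simp_all
  then have p: "a*c1 \<ge> -a" "b*c2 \<ge> -b" by (simp_all add: algebra_simps)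
  have "a*b*((c1-c2)^2+(d1-d2)^2) \<ge> 0" using assms(1,2) by simp
  then have "a*c1 = -a" "b*c2 = -b" using A' B' C p assms(3) by linarith+
  then have e1: "a*c1 = a*(-1)" and e2: "b*c2 = b*(-1)" by simp_all
  have "a \<noteq> 0" "b \<noteq> 0" using assms(1,2) by simp_all
  then have "c1 = -1" "c2 = -1" using e1 e2 mult_left_cancel by blast+
  then show ?thesis by simp
qed

lemma ca_pos: "ca q > 0" and cb_pos: "cb q > 0" and cab: "ca q + cb q = 1/2"
  using sq_pos[of q] sq_gt[of q]
  by (auto simp: ca_def cb_def lp_def lm_def field_simps)

lemma pst_iff: "pst_at (H_P3 q) 0 2 t \<longleftrightarrow> cos (t * lp q) = -1 \<and> cos (t * lm q) = -1"
proof -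
  let ?z = "transfer_matrix (H_P3 q) t $ 0 $ 2"
  have re: "Re ?z = ca q * cos (t * lp q) + cb q * cos (t * lm q) - 1/2"
   and im: "Im ?z = ca q * sin (t * lp q) + cb q * sin (t * lm q)"
    unfolding entry02 by (simp_all add: Re_exp Im_exp)
  have "pst_at (H_P3 q) 0 2 t \<longleftrightarrow> (Re ?z)^2 + (Im ?z)^2 = 1"
    unfolding pst_at_def by (metis cmod_power2 norm_ge_zero power_one real_sqrt_one real_sqrt_unique)
  also have "\<dots> \<longleftrightarrow> cos (t * lp q) = -1 \<and> cos (t * lm q) = -1"
  proof
    assume "(Re ?z)^2 + (Im ?z)^2 = 1"
    then show "cos (t * lp q) = -1 \<and> cos (t * lm q) = -1"
      unfolding re im using key_ineq[of "ca q" "cb q" "cos (t * lp q)" "sin (t * lp q)" "cos (t * lm q)" "sin (t * lm q)", OF ca_pos cb_pos cab]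
      by (simp add: sin_cos_squared_add2)
  next
    assume c: "cos (t * lp q) = -1 \<and> cos (t * lm q) = -1"
    then have "sin (t * lp q) = 0" "sin (t * lm q) = 0"
      using sin_cos_squared_add[of "t * lp q"] sin_cos_squared_add[of "t * lm q"] by simp_all
    moreover have "ca q * cos (t * lp q) + cb q * cos (t * lm q) - 1/2 = -1" using c cab[of q] by simp
    ultimately show "(Re ?z)^2 + (Im ?z)^2 = 1" unfolding re im by simp
  qed
  finally show ?thesis .
qed


lemma lp_lm: "lp q - lm q = sq q" "lp q + lm q = q"
  by (simp_all add: lp_def lm_def field_simps)

lemma cos_odd: "odd (m::int) \<Longrightarrow> cos (real_of_int m * pi) = -1"
proof -
  assume "odd m"
  then obtain j where "m = 2*j + 1" by (metis oddE)
  then show ?thesis using cos_eq_minus1[of "real_of_int m * pi"] by auto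
qed

lemma forward:
  assumes "pst_at (H_P3 q) 0 2 t"
  shows "\<exists>k l :: int. odd (k + l) \<and> (real_of_int k ^ 2 - real_of_int l ^ 2) * q ^ 2 = 8 * real_of_int l ^ 2"
proof -
  have c1: "cos (t * lp q) = -1" and c2: "cos (t * lm q) = -1" using assms pst_iff by auto
  from c1[unfolded cos_eq_minus1] obtain m :: int where m: "t * lp q = (2*m+1)*pi" by auto
  from c2[unfolded cos_eq_minus1] obtain n :: int where n: "t * lm q = (2*n+1)*pi" by auto
  define k where "k = m - n"
  define l where "l = m + n + 1"
  have odd: "odd (k + l)" unfolding k_def l_def by presburger
  have "t * sq q = t * lp q - t * lm q" unfolding lp_lm(1)[symmetric] by (rule right_diff_distrib)
  also have "\<dots> = (2*m+1)*pi - (2*n+1)*pi" unfolding m n ..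
  also have "\<dots> = 2*pi*real_of_int k" unfolding k_def by (simp add: algebra_simps)
  finally have ks: "2*pi*real_of_int k = t * sq q" ..
  have "t * q = t * lp q + t * lm q" by (simp add: lp_def lm_def field_simps)
  also have "\<dots> = (2*m+1)*pi + (2*n+1)*pi" unfolding m n ..
  also have "\<dots> = 2*pi*real_of_int l" unfolding l_def by (simp add: algebra_simps)
  finally have lq: "2*pi*real_of_int l = t * q" ..
  have "(2*pi)^2 * ((real_of_int k ^ 2 - real_of_int l ^ 2) * q ^ 2 - 8 * real_of_int l ^ 2)
     = ((2*pi*real_of_int k)^2 - (2*pi*real_of_int l)^2) * q^2 - 8 * (2*pi*real_of_int l)^2"
    by (simp add: power2_eq_square algebra_simps)
  also have "\<dots> = t^2 * (sq q ^ 2 - q^2 - 8) * q^2" unfolding ks lq by (simp add: power2_eq_square algebra_simps)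
  also have "\<dots> = 0" by (simp add: sq_sq)
  finally have "(real_of_int k ^ 2 - real_of_int l ^ 2) * q ^ 2 - 8 * real_of_int l ^ 2 = 0" by simp
  then show ?thesis using odd by auto
qed

lemma backward:
  assumes "odd (k + l)" "(real_of_int k ^ 2 - real_of_int l ^ 2) * q ^ 2 = 8 * real_of_int l ^ 2"
  shows "pst_at (H_P3 q) 0 2 (2 * pi * real_of_int k / sqrt (q ^ 2 + 8))"
proof -
  let ?t = "2 * pi * real_of_int k / sq q"
  have "(real_of_int k * q)^2 = (real_of_int l * sq q)^2"
    using assms(2) by (simp add: power_mult_distrib sq_sq algebra_simps)
  then have "real_of_int k * q = real_of_int l * sq q \<or> real_of_int k * q = - (real_of_int l * sq q)"
    using power2_eq_iff by blast
  then have dj: "real_of_int k * q = real_of_int l * sq q \<or> real_of_int k * q = real_of_int (-l) * sq q" by simp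
  have "\<exists>l'::int. odd (k + l') \<and> real_of_int k * q = real_of_int l' * sq q"
  proof (cases "real_of_int k * q = real_of_int l * sq q")
    case True then show ?thesis using assms(1) by blast
  next
    case False
    then have "real_of_int k * q = real_of_int (-l) * sq q" using dj by blast
    moreover have "odd (k + (-l))" using assms(1) by presburger
    ultimately show ?thesis by blast
  qed
  then obtain l' :: int where l': "odd (k + l')" "real_of_int k * q = real_of_int l' * sq q" by blast
  have sp: "sq q > 0" by (rule sq_pos)
  have e1: "?t * lp q = real_of_int (l' + k) * pi"
  proof -
    have "?t * lp q = pi * (real_of_int k * q + real_of_int k * sq q) / sq q"
      using sp by (simp add: lp_def field_simps)
    also have "\<dots> = real_of_int (l' + k) * pi" using sp unfolding l'(2) by (simp add: field_simps)
    finally show ?thesis .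
  qed
  have e2: "?t * lm q = real_of_int (l' - k) * pi"
  proof -
    have "?t * lm q = pi * (real_of_int k * q - real_of_int k * sq q) / sq q"
      using sp by (simp add: lm_def field_simps)
    also have "\<dots> = real_of_int (l' - k) * pi" using sp unfolding l'(2) by (simp add: field_simps)
    finally show ?thesis .
  qed
  have o1: "odd (l' + k)" and o2: "odd (l' - k)" using l'(1) by presburger+
  have "cos (?t * lp q) = -1" unfolding e1 by (rule cos_odd[OF o1])
  moreover have "cos (?t * lm q) = -1" unfolding e2 by (rule cos_odd[OF o2])
  ultimately show ?thesis using pst_iff unfolding sq_def by blast
qed

theorem theorem3:
  fixes q :: real
  shows "(pst (H_P3 q) 0 2 \<longleftrightarrow>
           (\<exists>k l :: int. odd (k + l) \<and> (real_of_int k ^ 2 - real_of_int l ^ 2) * q ^ 2 = 8 * real_of_int l ^ 2))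
         \<and> (\<forall>k l :: int. odd (k + l) \<and> (real_of_int k ^ 2 - real_of_int l ^ 2) * q ^ 2 = 8 * real_of_int l ^ 2
              \<longrightarrow> pst_at (H_P3 q) 0 2 (2 * pi * real_of_int k / sqrt (q ^ 2 + 8)))"
proof (intro conjI iffI allI impI)
  assume "pst (H_P3 q) 0 2"
  then obtain T where "pst_at (H_P3 q) 0 2 T" unfolding pst_def by blast
  then show "\<exists>k l :: int. odd (k + l) \<and> (real_of_int k ^ 2 - real_of_int l ^ 2) * q ^ 2 = 8 * real_of_int l ^ 2"
    by (rule forward)
next
  assume "\<exists>k l :: int. odd (k + l) \<and> (real_of_int k ^ 2 - real_of_int l ^ 2) * q ^ 2 = 8 * real_of_int l ^ 2"
  then obtain k l :: int where "odd (k + l)" "(real_of_int k ^ 2 - real_of_int l ^ 2) * q ^ 2 = 8 * real_of_int l ^ 2"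
    by blast
  then have "pst_at (H_P3 q) 0 2 (2 * pi * real_of_int k / sqrt (q ^ 2 + 8))" by (rule backward)
  then show "pst (H_P3 q) 0 2" unfolding pst_def by blast
next
  fix k l :: int
  assume "odd (k + l) \<and> (real_of_int k ^ 2 - real_of_int l ^ 2) * q ^ 2 = 8 * real_of_int l ^ 2"
  then show "pst_at (H_P3 q) 0 2 (2 * pi * real_of_int k / sqrt (q ^ 2 + 8))"
    using backward by blast
qed

end
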